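(* Let $x_0\approx 4.113537611$ be the largest real root of $x^3-5x^2+15=0$, and define $$f(x):=\frac{\ln\left[-\frac{2(x^3-5x^2+15)}{x^2-3}\right]}{\ln\left[\frac{24(x^2-3)}{(x^2+3)^2}\right]}\qquad (3<x<x_0).$$ Let $x_1\approx 3.067873979\in(3,x_0)$ be the only root of $f'(x)=0$ in $(3,x_0)$, so that $f(x_1)\approx 5.977930729$. If $\lambda\le f(x_1)$, then for every triangle $$\sqrt{3}\,p\ \ge\ 10r-r\left(\frac{2r}{R}\right)^{\lambda}.$$ Equality holds if and only if $a:b:c=1:1:1$ (for any $\lambda\le f(x_1)$), or $\lambda=f(x_1)$ and $a:b:c=2(x_1^2-3):(x_1^2+3):(x_1^2+3)$.
   Context: For a triangle $ABC$, $a,b,c$ denote the side lengths, $p=\frac{a+b+c}{2}$ the semi-perimeter, $R$ the circumradius and $r$ the inradius. *)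

theory Defs
  imports Complex_Main
begin

definition is_triangle :: "real \<Rightarrow> real \<Rightarrow> real \<Rightarrow> bool" where
  "is_triangle a b c \<longleftrightarrow> a > 0 \<and> b > 0 \<and> c > 0 \<and> a < b + c \<and> b < a + c \<and> c < a + b"

definition semiperim :: "real \<Rightarrow> real \<Rightarrow> real \<Rightarrow> real" where
  "semiperim a b c = (a + b + c) / 2"

definition tri_area :: "real \<Rightarrow> real \<Rightarrow> real \<Rightarrow> real" where
  "tri_area a b c = (let p = semiperim a b c in sqrt (p * (p - a) * (p - b) * (p - c)))"

definition inradius :: "real \<Rightarrow> real \<Rightarrow> real \<Rightarrow> real" where
  "inradius a b c = tri_area a b c / semiperim a b c"

definition circumradius :: "real \<Rightarrow> real \<Rightarrow> real \<Rightarrow> real" where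
  "circumradius a b c = a * b * c / (4 * tri_area a b c)"

definition fpaper :: "real \<Rightarrow> real" where
  "fpaper x = ln (- (2 * (x^3 - 5 * x^2 + 15)) / (x^2 - 3)) / ln (24 * (x^2 - 3) / (x^2 + 3)^2)"

end

theory Submission
  imports Defs
begin


lemma ln_upper2: fixes u :: real assumes "0 < u" "u \<le> 1" shows "ln u \<le> 2*(u-1)/(u+1)"
proof -
  let ?g = "\<lambda>v. ln v - 2*(v-1)/(v+1)"
  have "?g u \<le> ?g 1"
  proof (rule DERIV_nonneg_imp_nondecreasing[where f="?g"])
    show "u \<le> 1" by fact
  next
    fix x assume x: "u \<le> x" "x \<le> 1"
    hence xp: "x > 0" using assms by auto
    show "\<exists>y. DERIV ?g x :> y \<and> 0 \<le> y"
    proof (intro exI conjI)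
      show "DERIV ?g x :> (1/x - 4/(x+1)^2)"
        using xp by (auto intro!: derivative_eq_intros simp: field_simps power2_eq_square)
      have x1: "x+1 \<noteq> 0" using xp by simp
      have "1/x - 4/(x+1)^2 = (x-1)^2/(x*(x+1)^2)" using xp x1 by (simp add: field_simps) (simp add: power2_eq_square algebra_simps)
      also have "\<dots> \<ge> 0" using xp by simp
      finally show "0 \<le> 1/x - 4/(x+1)^2" .
    qed
  qed
  thus ?thesis by simp
qed

lemma ln_lower2: fixes u :: real assumes "0 < u" "u \<le> 1" shows "(u - 1/u)/2 \<le> ln u"
proof -
  let ?g = "\<lambda>v. (v - 1/v)/2 - ln v"
  have "?g u \<le> ?g 1"
  proof (rule DERIV_nonneg_imp_nondecreasing[where f="?g"])
    show "u \<le> 1" by fact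
  next
    fix x assume x: "u \<le> x" "x \<le> 1"
    hence xp: "x > 0" using assms by auto
    show "\<exists>y. DERIV ?g x :> y \<and> 0 \<le> y"
    proof (intro exI conjI)
      show "DERIV ?g x :> ((1 + 1/x^2)/2 - 1/x)"
        using xp by (auto intro!: derivative_eq_intros simp: field_simps power2_eq_square)
      have "(1 + 1/x^2)/2 - 1/x = (x-1)^2/(2*x^2)" using xp by (simp add: field_simps power2_eq_square)
      also have "\<dots> \<ge> 0" using xp by simp
      finally show "0 \<le> (1 + 1/x^2)/2 - 1/x" .
    qed
  qed
  thus ?thesis by simp
qed

lemma ratio_gt:
  fixes lA lB UA LB c :: real
  assumes "lA \<le> UA" "LB \<le> lB" "lB < 0" "UA < c*LB" "c > 0"
  shows "c < lA / lB"
proof -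
  have "c*LB \<le> c*lB" using assms by (simp add: mult_left_mono)
  hence "lA < c*lB" using assms by linarith
  thus ?thesis using assms(3) by (simp add: neg_less_divide_eq mult.commute)
qed

lemma ratio_lt:
  fixes lA lB LA UB c :: real
  assumes "LA \<le> lA" "lB \<le> UB" "UB < 0" "c*UB < LA" "c > 0"
  shows "lA / lB < c"
proof -
  have "c*lB \<le> c*UB" using assms by (simp add: mult_left_mono)
  hence "c*lB < lA" using assms by linarith
  moreover have "lB < 0" using assms by linarith
  ultimately show ?thesis by (simp add: neg_divide_less_eq mult.commute)
qed

lemma fpaper_gt:
  fixes x A B c :: real
  assumes "A = -(2*(x^3-5*x^2+15))/(x^2-3)" "B = 24*(x^2-3)/(x^2+3)^2"
    "0 < A" "A \<le> 1" "0 < B" "B < 1" "2*(A-1)/(A+1) < c*((B-1/B)/2)" "c > 0"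
  shows "c < fpaper x"
proof -
  have "fpaper x = ln A / ln B" unfolding fpaper_def assms(1,2) by simp
  also have "c < \<dots>"
    by (rule ratio_gt[OF ln_upper2 ln_lower2]) (use assms in auto)
  finally show ?thesis .
qed

lemma fpaper_lt:
  fixes x A B c :: real
  assumes "A = -(2*(x^3-5*x^2+15))/(x^2-3)" "B = 24*(x^2-3)/(x^2+3)^2"
    "0 < A" "A \<le> 1" "0 < B" "B < 1" "c*(2*(B-1)/(B+1)) < (A-1/A)/2" "c > 0"
  shows "fpaper x < c"
proof -
  have "fpaper x = ln A / ln B" unfolding fpaper_def assms(1,2) by simp
  also have "\<dots> < c"
  proof (rule ratio_lt[OF ln_lower2 ln_upper2])
    show "2*(B-1)/(B+1) < 0" using assms(5,6) by (simp add: divide_neg_pos)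
  qed (use assms in auto)
  finally show ?thesis .
qed

lemma f_y0: "299/50 < fpaper (301/100)"
  by (rule fpaper_gt[OF refl refl]) (simp_all add: power2_eq_square power3_eq_cube)

lemma f_w0: "299/50 < fpaper (31/10)"
  by (rule fpaper_gt[OF refl refl]) (simp_all add: power2_eq_square power3_eq_cube)

lemma f_z0: "fpaper (767/250) < 299/50"
  by (rule fpaper_lt[OF refl refl]) (simp_all add: power2_eq_square power3_eq_cube)




lemma int_min_crit:
  fixes f :: "real \<Rightarrow> real"
  assumes "a < m" "m < b" "\<forall>x. a \<le> x \<and> x \<le> b \<longrightarrow> f m \<le> f x" "DERIV f m :> D"
  shows "D = 0"
proof (rule DERIV_local_min[OF assms(4), of "min (m-a) (b-m)"])
  show "0 < min (m-a) (b-m)" using assms by auto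
  show "\<forall>y. \<bar>m - y\<bar> < min (m - a) (b - m) \<longrightarrow> f m \<le> f y"
  proof (intro allI impI)
    fix y assume "\<bar>m - y\<bar> < min (m - a) (b - m)"
    hence "a \<le> y \<and> y \<le> b" by (auto simp: abs_if split: if_splits)
    thus "f m \<le> f y" using assms(3) by blast
  qed
qed

lemma int_max_crit:
  fixes f :: "real \<Rightarrow> real"
  assumes "a < m" "m < b" "\<forall>x. a \<le> x \<and> x \<le> b \<longrightarrow> f x \<le> f m" "DERIV f m :> D"
  shows "D = 0"
proof (rule DERIV_local_max[OF assms(4), of "min (m-a) (b-m)"])
  show "0 < min (m-a) (b-m)" using assms by auto
  show "\<forall>y. \<bar>m - y\<bar> < min (m - a) (b - m) \<longrightarrow> f y \<le> f m"
  proof (intro allI impI)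
    fix y assume "\<bar>m - y\<bar> < min (m - a) (b - m)"
    hence "a \<le> y \<and> y \<le> b" by (auto simp: abs_if split: if_splits)
    thus "f y \<le> f m" using assms(3) by blast
  qed
qed

lemma unique_min:
  fixes f :: "real \<Rightarrow> real"
  assumes diff: "\<forall>y\<in>{l<..<u}. \<exists>D. (f has_real_derivative D) (at y)"
  and crit: "\<forall>y\<in>{l<..<u}. (f has_real_derivative 0) (at y) \<longrightarrow> y = x1"
  and pts: "l < y0" "y0 < z0" "z0 < w0" "w0 < u"
  and vals: "f z0 < f y0" "f z0 < f w0"
  shows "\<forall>y\<in>{l<..<u}. y \<noteq> x1 \<longrightarrow> f x1 < f y"
proof -
  have cont: "isCont f y" if "l < y" "y < u" for y
    using diff that by (auto intro: DERIV_isCont)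
  have minc: "m = x1" if h: "a < m" "m < b" "l \<le> a" "b \<le> u" "\<forall>x. a \<le> x \<and> x \<le> b \<longrightarrow> f m \<le> f x" for a b m
  proof -
    obtain D where D: "(f has_real_derivative D) (at m)" using diff h by force
    have "D = 0" by (rule int_min_crit[OF h(1,2,5) D])
    thus ?thesis using crit D h by auto
  qed
  have maxc: "m = x1" if h: "a < m" "m < b" "l \<le> a" "b \<le> u" "\<forall>x. a \<le> x \<and> x \<le> b \<longrightarrow> f x \<le> f m" for a b m
  proof -
    obtain D where D: "(f has_real_derivative D) (at m)" using diff h by force
    have "D = 0" by (rule int_max_crit[OF h(1,2,5) D])
    thus ?thesis using crit D h by auto
  qed
  obtain M where M1: "\<forall>x. y0 \<le> x \<and> x \<le> w0 \<longrightarrow> M \<le> f x" and M2: "\<exists>x. y0 \<le> x \<and> x \<le> w0 \<and> f x = M"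
    using isCont_eq_Lb[of y0 w0 f] pts cont by force
  then obtain m where m: "y0 \<le> m" "m \<le> w0" "f m = M" by blast
  have "M \<le> f z0" using M1 pts by auto
  hence "m \<noteq> y0" "m \<noteq> w0" using m vals by auto
  hence mx: "m = x1" using minc[of y0 m w0] m M1 pts by auto
  have x1min: "\<forall>x. y0 \<le> x \<and> x \<le> w0 \<longrightarrow> f x1 \<le> f x" using M1 m mx by auto
  have x1in: "y0 < x1" "x1 < w0" using m mx \<open>m \<noteq> y0\<close> \<open>m \<noteq> w0\<close> by auto
  show ?thesis
  proof (intro ballI impI)
    fix y assume y: "y \<in> {l<..<u}" "y \<noteq> x1"
    show "f x1 < f y"
    proof (rule ccontr)
      assume "\<not> f x1 < f y"
      hence le: "f y \<le> f x1" by simp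
      have "f x1 \<le> f z0" using x1min pts by auto
      hence fy0: "f x1 < f y0" using vals by linarith
      have fw0: "f x1 < f w0" using \<open>f x1 \<le> f z0\<close> vals by linarith
      consider "y < y0" | "y0 \<le> y \<and> y \<le> w0" | "w0 < y" by linarith
      thus False
      proof cases
        case 1
        obtain N where N1: "\<forall>x. y \<le> x \<and> x \<le> x1 \<longrightarrow> f x \<le> N" and N2: "\<exists>x. y \<le> x \<and> x \<le> x1 \<and> f x = N"
          using isCont_eq_Ub[of y x1 f] 1 x1in y pts cont by force
        then obtain n where n: "y \<le> n" "n \<le> x1" "f n = N" by blast
        have "f y0 \<le> N" using N1 1 x1in by auto
        hence "n \<noteq> y" "n \<noteq> x1" using n le fy0 by auto
        hence "n = x1" using maxc[of y n x1] n N1 y x1in pts by auto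
        thus False using \<open>n \<noteq> x1\<close> by simp
      next
        case 2
        have "y = x1" using minc[of y0 y w0] 2 y x1min le pts
          by (smt (verit) fw0 fy0)
        thus False using y by simp
      next
        case 3
        obtain N where N1: "\<forall>x. x1 \<le> x \<and> x \<le> y \<longrightarrow> f x \<le> N" and N2: "\<exists>x. x1 \<le> x \<and> x \<le> y \<and> f x = N"
          using isCont_eq_Ub[of x1 y f] 3 x1in y pts cont by force
        then obtain n where n: "x1 \<le> n" "n \<le> y" "f n = N" by blast
        have "f w0 \<le> N" using N1 3 x1in by auto
        hence "n \<noteq> y" "n \<noteq> x1" using n le fw0 by auto
        hence "n = x1" using maxc[of x1 n y] n N1 y x1in pts by auto
        thus False using \<open>n \<noteq> x1\<close> by simp
      qed
    qed
  qed
qed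




lemma g_fact:
  fixes y x0 :: real
  shows "y^3 - 5*y^2 + 15 = (y - x0) * (y^2 + x0*y + x0^2 - 5*y - 5*x0) + (x0^3 - 5*x0^2 + 15)"
  by algebra

lemma q_pos:
  fixes y x0 :: real
  assumes "3 \<le> y" "4 \<le> x0"
  shows "y^2 + x0*y + x0^2 - 5*y - 5*x0 > 0"
proof -
  have e: "y^2 + x0*y + x0^2 - 5*y - 5*x0 = 2 + 5*(y-3) + (y-3)^2 + 6*(x0-4) + (y-3)*(x0-4) + (x0-4)^2"
    by algebra
  have "(y-3)*(x0-4) \<ge> 0" using assms by simp
  thus ?thesis unfolding e using assms by (smt (verit) zero_le_power2)
qed

lemma x0_gt4:
  fixes x0 :: real
  assumes largest: "\<forall>y::real. y^3 - 5 * y^2 + 15 = 0 \<longrightarrow> y \<le> x0"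
  shows "x0 > 4"
proof -
  have "\<exists>x. 41/10 \<le> x \<and> x \<le> 103/25 \<and> (\<lambda>y::real. y^3 - 5 * y^2 + 15) x = 0"
    by (rule IVT) (auto simp: power2_eq_square power3_eq_cube intro!: continuous_intros)
  then obtain x :: real where "41/10 \<le> x" "x^3 - 5 * x^2 + 15 = 0" by auto
  thus ?thesis using largest by force
qed

lemma g_neg:
  fixes x0 y :: real
  assumes root: "x0^3 - 5 * x0^2 + 15 = 0" and "x0 > 4" "3 \<le> y" "y < x0"
  shows "y^3 - 5*y^2 + 15 < 0"
proof -
  have "(y - x0) * (y^2 + x0*y + x0^2 - 5*y - 5*x0) < 0"
    using q_pos[of y x0] assms by (simp add: mult_neg_pos)
  thus ?thesis using g_fact[of y x0] root by linarith
qed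

lemma g_pos:
  fixes x0 y :: real
  assumes root: "x0^3 - 5 * x0^2 + 15 = 0" and "x0 > 4" "x0 < y"
  shows "y^3 - 5*y^2 + 15 > 0"
proof -
  have "(y - x0) * (y^2 + x0*y + x0^2 - 5*y - 5*x0) > 0"
    using q_pos[of y x0] assms by simp
  thus ?thesis using g_fact[of y x0] root by linarith
qed

lemma B_lt1:
  fixes y :: real
  assumes "3 < y"
  shows "24*(y^2-3)/(y^2+3)^2 < 1" "0 < 24*(y^2-3)/(y^2+3)^2"
proof -
  have y9: "y^2 > 9" using power_strict_mono[of 3 y 2] assms by simp
  have "(y^2+3)^2 - 24*(y^2-3) = (y^2-9)^2" by algebra
  moreover have "(y^2-9)^2 > 0" using y9 by simp
  moreover have "(y^2+3)^2 > 0" using y9 by simp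
  ultimately have "24*(y^2-3) < (y^2+3)^2" by linarith
  thus "24*(y^2-3)/(y^2+3)^2 < 1" using \<open>(y^2+3)^2 > 0\<close> by (simp add: divide_less_eq)
  show "0 < 24*(y^2-3)/(y^2+3)^2" using y9 by simp
qed

lemma fpaper_diff:
  fixes x0 y :: real
  assumes root: "x0^3 - 5 * x0^2 + 15 = 0" and x4: "x0 > 4" and y: "3 < y" "y < x0"
  shows "\<exists>D. (fpaper has_real_derivative D) (at y)"
proof -
  have g: "y^3 - 5*y^2 + 15 < 0" using g_neg[OF root x4] y by simp
  have y9: "y^2 > 9" using power_strict_mono[of 3 y 2] y by simp
  have A: "0 < - (2 * (y^3 - 5 * y^2 + 15)) / (y^2 - 3)" using g y9 by (simp add: divide_pos_pos)
  have B1: "24*(y^2-3)/(y^2+3)^2 < 1" and B0: "0 < 24*(y^2-3)/(y^2+3)^2" using B_lt1 y by auto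
  have "ln (24*(y^2-3)/(y^2+3)^2) < 0" using B0 B1 ln_less_zero_iff by blast
  hence lnB: "ln (24*(y^2-3)/(y^2+3)^2) \<noteq> 0" by simp
  have d1: "y^2 - 3 \<noteq> 0" "(y^2+3)^2 \<noteq> 0" using y9 by auto
  show ?thesis unfolding fpaper_def
    apply (rule exI)
    apply (rule derivative_eq_intros refl | (use A B0 lnB d1 in simp; fail))+
    done
qed




lemma e_id1:
  fixes a b c :: real
  shows "(b+c-a)*(c+a-b)*(a+b-c) = - ((a+b+c)^3) + 4*(a+b+c)*(a*b+b*c+c*a) - 8*(a*b*c)"
  by algebra

lemma e_id2:
  fixes a b c :: real
  shows "(a-b)^2*(b-c)^2*(c-a)^2 = (a+b+c)^2*(a*b+b*c+c*a)^2 - 4*(a*b+b*c+c*a)^3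
     - 4*(a+b+c)^3*(a*b*c) + 18*(a+b+c)*(a*b+b*c+c*a)*(a*b*c) - 27*(a*b*c)^2"
  by algebra

lemma key_id:
  fixes E1 E3 X \<rho> :: real
  assumes "X = E1^3 + (8 + 2*\<rho> - \<rho>^2)*E3"
  shows "4*E1^3*X^2 - 4*X^3 - 256*E1^6*E3 + 288*E1^3*E3*X - 1728*E1^3*E3^2
     = -4*E3*((E3*(\<rho>+2)^3 - \<rho>*E1^3)*(E3*(4-\<rho>)^3 - (2-\<rho>)*E1^3))"
  unfolding assms by algebra

lemma blundon_id:
  fixes a b c \<rho> :: real
  assumes h: "(b+c-a)*(c+a-b)*(a+b-c) = \<rho>*(2-\<rho>)*(a*b*c)"
  shows "16*(a+b+c)^3*((a-b)^2*(b-c)^2*(c-a)^2)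
     = -(a*b*c)*(((a*b*c)*(\<rho>+2)^3 - \<rho>*(a+b+c)^3)*((a*b*c)*(4-\<rho>)^3 - (2-\<rho>)*(a+b+c)^3))"
proof -
  define E1 E2 E3 where "E1 = a+b+c" "E2 = a*b+b*c+c*a" "E3 = a*b*c"
  have X: "4*E1*E2 = E1^3 + (8 + 2*\<rho> - \<rho>^2)*E3"
    unfolding E1_E2_E3_def using h by algebra
  have "64*E1^3*((a-b)^2*(b-c)^2*(c-a)^2) = 4*E1^3*(4*E1*E2)^2 - 4*(4*E1*E2)^3 - 256*E1^6*E3 + 288*E1^3*E3*(4*E1*E2) - 1728*E1^3*E3^2"
    unfolding e_id2 E1_E2_E3_def by algebra
  also have "\<dots> = -4*E3*((E3*(\<rho>+2)^3 - \<rho>*E1^3)*(E3*(4-\<rho>)^3 - (2-\<rho>)*E1^3))"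
    by (rule key_id[OF X])
  finally show ?thesis unfolding E1_E2_E3_def by (simp add: mult_ac)
qed

lemma blundon:
  fixes a b c \<rho> :: real
  assumes pos: "a > 0" "b > 0" "c > 0" and r: "1 \<le> \<rho>" "\<rho> < 2"
    and h: "(b+c-a)*(c+a-b)*(a+b-c) = \<rho>*(2-\<rho>)*(a*b*c)"
  shows "(a*b*c)*(\<rho>+2)^3 \<le> \<rho>*(a+b+c)^3"
proof -
  define U V where "U = (a*b*c)*(\<rho>+2)^3 - \<rho>*(a+b+c)^3" and "V = (a*b*c)*(4-\<rho>)^3 - (2-\<rho>)*(a+b+c)^3"
  have "16*(a+b+c)^3*((a-b)^2*(b-c)^2*(c-a)^2) \<ge> 0" using pos by simp
  hence "-(a*b*c)*(U*V) \<ge> 0" using blundon_id[OF h] unfolding U_def V_def by simp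
  hence UV: "U*V \<le> 0" using pos by (simp add: mult_le_0_iff zero_less_mult_iff)
  have lin: "V*(\<rho>+2)^3 - U*(4-\<rho>)^3 = 16*(\<rho>-1)^3*(a+b+c)^3" unfolding U_def V_def by algebra
  have "U \<le> 0"
  proof (rule ccontr)
    assume "\<not> U \<le> 0"
    hence U0: "U > 0" by simp
    have "U*(4-\<rho>)^3 > 0" using U0 r by simp
    moreover have "16*(\<rho>-1)^3*(a+b+c)^3 \<ge> 0" using r pos by simp
    ultimately have "V*(\<rho>+2)^3 > 0" using lin by linarith
    hence "V > 0" using r by (simp add: zero_less_mult_iff)
    hence "U*V > 0" using U0 by simp
    thus False using UV by simp
  qed
  thus ?thesis unfolding U_def V_def by simp
qed

lemma blundon_iso:
  fixes x y \<rho> :: real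
  assumes pos: "x > 0" "y > 0" and r: "1 \<le> \<rho>" "\<rho> < 2"
    and h: "(y+y-x)*(y+x-y)*(x+y-y) = \<rho>*(2-\<rho>)*(x*y*y)"
    and U: "(x*y*y)*(\<rho>+2)^3 = \<rho>*(x+y+y)^3"
  shows "x = \<rho>*y"
proof -
  have "x * ((x - \<rho>*y)*(x - (2-\<rho>)*y)) = 0" using h by algebra
  hence "(x - \<rho>*y)*(x - (2-\<rho>)*y) = 0" using pos by simp
  moreover have "x \<noteq> (2-\<rho>)*y \<or> \<rho> = 1"
  proof (rule ccontr)
    assume "\<not> (x \<noteq> (2-\<rho>)*y \<or> \<rho> = 1)"
    hence x: "x = (2-\<rho>)*y" and "\<rho> \<noteq> 1" by auto
    have "y^3*(16*(\<rho>-1)^3) = 0" using U unfolding x by algebra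
    hence "(\<rho>-1)^3 = 0" using pos by simp
    thus False using \<open>\<rho> \<noteq> 1\<close> by simp
  qed
  ultimately show ?thesis by auto
qed

lemma blundon_eq:
  fixes a b c \<rho> :: real
  assumes pos: "a > 0" "b > 0" "c > 0" and r: "1 \<le> \<rho>" "\<rho> < 2"
    and h: "(b+c-a)*(c+a-b)*(a+b-c) = \<rho>*(2-\<rho>)*(a*b*c)"
    and U: "(a*b*c)*(\<rho>+2)^3 = \<rho>*(a+b+c)^3"
  shows "(b = c \<and> a = \<rho>*b) \<or> (c = a \<and> b = \<rho>*c) \<or> (a = b \<and> c = \<rho>*a)"
proof -
  have "16*(a+b+c)^3*((a-b)^2*(b-c)^2*(c-a)^2) = 0" using blundon_id[OF h] U by simp
  hence "(a-b)^2*(b-c)^2*(c-a)^2 = 0" using pos by simp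
  hence "a = b \<or> b = c \<or> c = a" by simp
  thus ?thesis
  proof (elim disjE)
    assume e: "b = c"
    have "a = \<rho>*b" by (rule blundon_iso[OF pos(1,2) r]) (use h U e in \<open>simp_all add: mult_ac\<close>)
    thus ?thesis using e by simp
  next
    assume e: "c = a"
    have "b = \<rho>*c" by (rule blundon_iso[OF pos(2,3) r]) (use h U e in \<open>simp_all add: algebra_simps\<close>)
    thus ?thesis using e by simp
  next
    assume e: "a = b"
    have "c = \<rho>*a" by (rule blundon_iso[OF pos(3,1) r]) (use h U e in \<open>simp_all add: algebra_simps\<close>)
    thus ?thesis using e by simp
  qed
qed




definition Tf :: "real \<Rightarrow> real \<Rightarrow> real \<Rightarrow> real" where
  "Tf a b c = (b+c-a)*(c+a-b)*(a+b-c)/(a*b*c)"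
definition Sf2 :: "real \<Rightarrow> real \<Rightarrow> real \<Rightarrow> real" where
  "Sf2 a b c = 3*(a+b+c)^3/((b+c-a)*(c+a-b)*(a+b-c))"

lemma tri_facts:
  fixes a b c :: real
  assumes tri: "is_triangle a b c"
  shows "inradius a b c > 0"
    "2 * inradius a b c / circumradius a b c = Tf a b c"
    "sqrt 3 * semiperim a b c / inradius a b c > 0"
    "(sqrt 3 * semiperim a b c / inradius a b c)^2 = Sf2 a b c"
    "0 < Tf a b c" "Tf a b c \<le> 1"
proof -
  define p where "p = semiperim a b c"
  define Pi where "Pi = (p-a)*(p-b)*(p-c)"
  have pos: "a > 0" "b > 0" "c > 0" "a < b + c" "b < a + c" "c < a + b" using tri unfolding is_triangle_def by auto
  have p: "p = (a+b+c)/2" unfolding p_def semiperim_def by simp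
  have pp: "p > 0" "p - a > 0" "p - b > 0" "p - c > 0" using pos unfolding p by auto
  have Pi0: "Pi > 0" unfolding Pi_def using pp by simp
  have d: "p-a = (b+c-a)/2" "p-b = (c+a-b)/2" "p-c = (a+b-c)/2" unfolding p by auto
  have Pi8: "8*Pi = (b+c-a)*(c+a-b)*(a+b-c)" unfolding Pi_def d by simp
  define S where "S = sqrt (p*Pi)"
  have S0: "S > 0" unfolding S_def using pp Pi0 by simp
  have S2: "S^2 = p*Pi" unfolding S_def using pp Pi0 by simp
  have area: "tri_area a b c = S" unfolding tri_area_def S_def Pi_def p_def Let_def by (simp add: mult.assoc)
  have r: "inradius a b c = S/p" unfolding inradius_def area p_def ..
  have R: "circumradius a b c = a*b*c/(4*S)" unfolding circumradius_def area ..
  show "inradius a b c > 0" unfolding r using S0 pp by simp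
  have "2 * inradius a b c / circumradius a b c = 8*S^2/(p*(a*b*c))"
    unfolding r R using S0 pp pos by (simp add: field_simps power2_eq_square)
  also have "\<dots> = 8*Pi/(a*b*c)" unfolding S2 using pp by simp
  also have "\<dots> = Tf a b c" unfolding Tf_def Pi8 ..
  finally show "2 * inradius a b c / circumradius a b c = Tf a b c" .
  show "sqrt 3 * semiperim a b c / inradius a b c > 0" unfolding r p_def[symmetric] using S0 pp by simp
  have "(sqrt 3 * semiperim a b c / inradius a b c)^2 = 3*p^4/S^2"
    unfolding r p_def[symmetric] using S0 pp by (simp add: field_simps power2_eq_square eval_nat_numeral)
  also have "\<dots> = 3*p^3/Pi" unfolding S2 using pp Pi0 by (simp add: field_simps eval_nat_numeral)
  also have "\<dots> = Sf2 a b c" unfolding Sf2_def Pi8[symmetric] p by (simp add: field_simps power3_eq_cube)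
  finally show "(sqrt 3 * semiperim a b c / inradius a b c)^2 = Sf2 a b c" .
  show "0 < Tf a b c" unfolding Tf_def Pi8[symmetric] using Pi0 pos by simp
  define u v w where "u = b+c-a" "v = c+a-b" "w = a+b-c"
  have uvw: "u > 0" "v > 0" "w > 0" unfolding u_v_w_def using pos by auto
  have e1: "c^2 - u*v = (a-b)^2" "a^2 - v*w = (b-c)^2" "b^2 - w*u = (c-a)^2" unfolding u_v_w_def by algebra+
  have f1: "u*v \<le> c^2" "v*w \<le> a^2" "w*u \<le> b^2" using e1 by (smt (verit) zero_le_power2)+
  have "(u*v)*(v*w) \<le> c^2*a^2" by (rule mult_mono) (use f1 uvw in auto)
  hence "(u*v)*(v*w)*(w*u) \<le> c^2*a^2*b^2" by (rule mult_mono) (use f1 uvw in auto)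
  hence "(u*v*w)^2 \<le> (a*b*c)^2" by (simp add: power2_eq_square mult_ac)
  hence "u*v*w \<le> a*b*c" by (rule power2_le_imp_le) (use pos in simp)
  thus "Tf a b c \<le> 1" unfolding Tf_def u_v_w_def[symmetric] using pos by simp
qed

definition shp :: "real \<Rightarrow> real \<Rightarrow> real \<Rightarrow> real \<Rightarrow> bool" where
  "shp x1 a b c = (\<exists>t>0. (a = t * (2 * (x1^2 - 3)) \<and> b = t * (x1^2 + 3) \<and> c = t * (x1^2 + 3))
                    \<or> (b = t * (2 * (x1^2 - 3)) \<and> a = t * (x1^2 + 3) \<and> c = t * (x1^2 + 3))
                    \<or> (c = t * (2 * (x1^2 - 3)) \<and> a = t * (x1^2 + 3) \<and> b = t * (x1^2 + 3)))"

lemma xrho: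
  fixes \<rho> x :: real
  assumes r: "1 \<le> \<rho>" "\<rho> < 2" and x2: "x^2 = 3*(2+\<rho>)/(2-\<rho>)"
  shows "-(2*(x^3-5*x^2+15))/(x^2-3) = 10 - x*(2+\<rho>)/\<rho>"
    "24*(x^2-3)/(x^2+3)^2 = \<rho>*(2-\<rho>)"
    "\<rho> = 2*(x^2-3)/(x^2+3)"
proof -
  have x3: "x^3 = x*x^2" by (simp add: power2_eq_square power3_eq_cube)
  have n: "2 - \<rho> \<noteq> 0" "\<rho> \<noteq> 0" using r by auto
  have a: "x^2 - 3 = 6*\<rho>/(2-\<rho>)" unfolding x2 using n by (simp add: field_simps)
  have b: "x^2 + 3 = 12/(2-\<rho>)" unfolding x2 using n by (simp add: field_simps)
  have nz: "x^2 - 3 \<noteq> 0" unfolding a using n r by simp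
  have "-(2*(x^3-5*x^2+15))/(x^2-3) = 10 - x*(2*x^2/(x^2-3))"
    using nz unfolding x3 by (simp add: field_simps)
  also have "2*x^2/(x^2-3) = (2+\<rho>)/\<rho>" unfolding a unfolding x2 using n by (simp add: field_simps)
  finally show "-(2*(x^3-5*x^2+15))/(x^2-3) = 10 - x*(2+\<rho>)/\<rho>" by simp
  show "24*(x^2-3)/(x^2+3)^2 = \<rho>*(2-\<rho>)" unfolding a b using n by (simp add: field_simps power2_eq_square)
  show "\<rho> = 2*(x^2-3)/(x^2+3)" unfolding a b using n by (simp add: field_simps)
qed

lemma core:
  fixes x0 x1 a b c :: real
  assumes root: "x0^3 - 5*x0^2 + 15 = 0" and x04: "x0 > 4"
    and x1in: "3 < x1" "x1 < x0"
    and Fmin: "\<forall>y\<in>{3<..<x0}. y \<noteq> x1 \<longrightarrow> fpaper x1 < fpaper y"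
    and tri: "is_triangle a b c"
  shows "10 - sqrt 3 * semiperim a b c / inradius a b c \<le> Tf a b c powr (fpaper x1)
     \<and> (10 - sqrt 3 * semiperim a b c / inradius a b c = Tf a b c powr (fpaper x1) \<longrightarrow>
          (a = b \<and> b = c) \<or> shp x1 a b c)"
proof -
  define T where "T = Tf a b c"
  define s where "s = sqrt 3 * semiperim a b c / inradius a b c"
  define F where "F = fpaper x1"
  have pos: "a > 0" "b > 0" "c > 0" "a < b + c" "b < a + c" "c < a + b" using tri unfolding is_triangle_def by auto
  have T0: "0 < T" "T \<le> 1" using tri_facts[OF tri] unfolding T_def by auto
  have s0: "s > 0" and s2: "s^2 = Sf2 a b c" using tri_facts[OF tri] unfolding s_def by auto
  define E1 E3 H where "E1 = a+b+c" "E3 = a*b*c" "H = (b+c-a)*(c+a-b)*(a+b-c)"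
  have E0: "E1 > 0" "E3 > 0" unfolding E1_E3_H_def using pos by auto
  have HT: "H = T*E3" unfolding T_def Tf_def E1_E3_H_def using pos by simp
  define q where "q = sqrt (1 - T)"
  have q: "0 \<le> q" "q < 1" "q^2 = 1 - T" unfolding q_def using T0 by auto
  define \<rho> where "\<rho> = 1 + q"
  have r: "1 \<le> \<rho>" "\<rho> < 2" unfolding \<rho>_def using q by auto
  have rT: "\<rho>*(2-\<rho>) = T" unfolding \<rho>_def using q(3) by (simp add: algebra_simps power2_eq_square)
  have h: "(b+c-a)*(c+a-b)*(a+b-c) = \<rho>*(2-\<rho>)*(a*b*c)" using HT rT unfolding E1_E3_H_def by simp
  have Bl: "E3*(\<rho>+2)^3 \<le> \<rho>*E1^3" using blundon[OF pos(1-3) r h] unfolding E1_E3_H_def .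
  define X2 where "X2 = 3*(2+\<rho>)/(2-\<rho>)"
  have X29: "X2 \<ge> 9" unfolding X2_def using r by (simp add: field_simps)
  define x where "x = sqrt X2"
  have x2: "x^2 = 3*(2+\<rho>)/(2-\<rho>)" unfolding x_def X2_def[symmetric] using X29 by simp
  have x3: "x \<ge> 3" unfolding x_def using X29 real_sqrt_le_mono[of 9 X2] by simp
  define Sx where "Sx = x*(2+\<rho>)/\<rho>"
  have Sx0: "Sx > 0" unfolding Sx_def using x3 r by simp
  have "Sx^2 = x^2*(2+\<rho>)^2/\<rho>^2" unfolding Sx_def by (simp add: power_mult_distrib power_divide)
  also have "\<dots> = 3*(2+\<rho>)^3/((2-\<rho>)*\<rho>^2)" unfolding x2 using r by (simp add: field_simps power2_eq_square power3_eq_cube)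
  finally have Sx2: "Sx^2 = 3*(2+\<rho>)^3/((2-\<rho>)*\<rho>^2)" .
  have s2': "s^2 = 3*E1^3/(\<rho>*(2-\<rho>)*E3)" unfolding s2 Sf2_def using h unfolding E1_E3_H_def by simp
  define K where "K = \<rho>^2*(2-\<rho>)*E3"
  have K0: "K > 0" unfolding K_def using r E0 by simp
  have nz: "\<rho> \<noteq> 0" "2 - \<rho> \<noteq> 0" "E3 \<noteq> 0" using r E0 by auto
  have m1: "s^2 * K = 3*\<rho>*E1^3" unfolding s2' K_def using nz by (simp add: field_simps power2_eq_square)
  have m2: "Sx^2 * K = 3*(2+\<rho>)^3*E3" unfolding Sx2 K_def using nz by (simp add: field_simps power2_eq_square)
  have sS: "(s^2 - Sx^2)*K = 3*(\<rho>*E1^3) - 3*(E3*(\<rho>+2)^3)" proof -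
    have "(s^2 - Sx^2)*K = s^2*K - Sx^2*K" by (simp add: left_diff_distrib)
    also have "\<dots> = 3*(\<rho>*E1^3) - 3*(E3*(\<rho>+2)^3)" unfolding m1 m2 by (simp add: add.commute mult.commute)
    finally show ?thesis .
  qed
  have "(s^2 - Sx^2)*K \<ge> 0" using sS Bl by linarith
  hence "s^2 - Sx^2 \<ge> 0" using K0 by (auto simp: zero_le_mult_iff)
  hence "Sx^2 \<le> s^2" by linarith
  hence sge: "Sx \<le> s" using s0 power2_le_imp_le[of Sx s] by linarith
  have sSeq: "E3*(\<rho>+2)^3 = \<rho>*E1^3" if "s = Sx"
  proof -
    have "(s^2 - Sx^2)*K = 0" using that by simp
    thus ?thesis using sS by linarith
  qed
  note xr = xrho[OF r x2]
  have Bx: "24*(x^2-3)/(x^2+3)^2 = T" using xr(2) rT by simp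
  have fx: "fpaper x = ln (10 - Sx) / ln T" unfolding fpaper_def xr(1) Bx Sx_def ..
  have Tp0: "T powr F > 0" using T0 by simp
  have x29: "x^2 \<ge> 9" using x2 X29 unfolding X2_def by simp
  have main: "10 - s \<le> T powr F \<and> (10 - s = T powr F \<longrightarrow> (a = b \<and> b = c) \<or> shp x1 a b c)"
  proof (cases "Sx \<ge> 10")
    case True
    hence "10 - s < T powr F" using sge Tp0 by linarith
    thus ?thesis by auto
  next
    case False
    have A0: "10 - Sx > 0" using False by simp
    have g: "x^3-5*x^2+15 < 0"
    proof (rule ccontr)
      assume "\<not> x^3-5*x^2+15 < 0"
      hence "-(2*(x^3-5*x^2+15)) \<le> 0" by simp
      moreover have "x^2 - 3 > 0" using x29 by simp
      ultimately have "-(2*(x^3-5*x^2+15))/(x^2-3) \<le> 0" by (simp add: divide_nonpos_pos)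
      thus False using xr(1)[folded Sx_def] A0 by linarith
    qed
    have xlt: "x < x0"
    proof (rule ccontr)
      assume "\<not> x < x0"
      hence "x = x0 \<or> x0 < x" by auto
      thus False using g root g_pos[OF root x04, of x] by auto
    qed
    show ?thesis
    proof (cases "x = 3")
      case True
      have r1: "\<rho> = 1" using xr(3) unfolding True by simp
      have T1: "T = 1" using rT r1 by simp
      have S9: "Sx = 9" unfolding Sx_def True r1 by simp
      have ineq: "10 - s \<le> T powr F" using sge S9 T1 by simp
      moreover have "(a = b \<and> b = c)" if "10 - s = T powr F"
      proof -
        have "s = Sx" using that S9 T1 by simp
        hence "E3*(\<rho>+2)^3 = \<rho>*E1^3" by (rule sSeq)
        hence "(b = c \<and> a = \<rho>*b) \<or> (c = a \<and> b = \<rho>*c) \<or> (a = b \<and> c = \<rho>*a)"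
          using blundon_eq[OF pos(1-3) r h] unfolding E1_E3_H_def by simp
        thus ?thesis unfolding r1 by auto
      qed
      ultimately show ?thesis by blast
    next
      case False
      hence x3': "3 < x" using x3 by simp
      have T1: "T < 1" using B_lt1(1)[OF x3'] Bx by simp
      have lnT: "ln T < 0" using T1 T0 by simp
      have Fle: "F \<le> fpaper x" unfolding F_def using Fmin x3' xlt by (cases "x = x1") force+
      hence lnA: "ln (10 - Sx) \<le> F * ln T" unfolding fx using lnT by (simp add: neg_le_divide_eq)
      have Tp: "T powr F = exp (F * ln T)" unfolding powr_def using T0 by simp
      have AleT: "10 - Sx \<le> T powr F" unfolding Tp using lnA A0
        by (metis exp_le_cancel_iff exp_ln)
      have ineq: "10 - s \<le> T powr F" using AleT sge by linarith
      moreover have "shp x1 a b c" if eq: "10 - s = T powr F"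
      proof -
        have sSx: "s = Sx" using eq AleT sge by linarith
        have "10 - Sx = exp (F * ln T)" using eq AleT sge Tp by linarith
        hence "ln (10 - Sx) = F * ln T" by (metis ln_exp)
        hence "F = fpaper x" unfolding fx using lnT by simp
        hence xx1: "x = x1" using Fmin x3' xlt unfolding F_def by force
        have "E3*(\<rho>+2)^3 = \<rho>*E1^3" by (rule sSeq[OF sSx])
        hence bl: "(b = c \<and> a = \<rho>*b) \<or> (c = a \<and> b = \<rho>*c) \<or> (a = b \<and> c = \<rho>*a)"
          using blundon_eq[OF pos(1-3) r h] unfolding E1_E3_H_def by simp
        have rx: "\<rho> = 2*(x1^2-3)/(x1^2+3)" using xr(3) xx1 by simp
        have d0: "x1^2 + 3 > 0" using zero_le_power2[of x1] by linarith
        show ?thesis unfolding shp_def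
        proof -
          from bl show "\<exists>t>0. (a = t * (2 * (x1^2 - 3)) \<and> b = t * (x1^2 + 3) \<and> c = t * (x1^2 + 3))
                    \<or> (b = t * (2 * (x1^2 - 3)) \<and> a = t * (x1^2 + 3) \<and> c = t * (x1^2 + 3))
                    \<or> (c = t * (2 * (x1^2 - 3)) \<and> a = t * (x1^2 + 3) \<and> b = t * (x1^2 + 3))"
          proof (elim disjE conjE)
            assume "b = c" "a = \<rho>*b"
            thus ?thesis using d0 pos unfolding rx by (intro exI[of _ "b/(x1^2+3)"]) (auto simp: field_simps)
          next
            assume "c = a" "b = \<rho>*c"
            thus ?thesis using d0 pos unfolding rx by (intro exI[of _ "a/(x1^2+3)"]) (auto simp: field_simps)
          next
            assume "a = b" "c = \<rho>*a"
            thus ?thesis using d0 pos unfolding rx by (intro exI[of _ "a/(x1^2+3)"]) (auto simp: field_simps)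
          qed
        qed
      qed
      ultimately show ?thesis by blast
    qed
  qed
  thus ?thesis unfolding T_def s_def F_def .
qed




lemma Tf_sym: "Tf a b c = Tf b a c" "Tf a b c = Tf c b a"
  unfolding Tf_def by (simp_all add: ac_simps)

lemma Sf2_sym: "Sf2 a b c = Sf2 b a c" "Sf2 a b c = Sf2 c b a"
  unfolding Sf2_def by (simp_all add: ac_simps)

lemma iso_valsX:
  fixes X t :: real
  assumes X: "X > 9" and t: "t > 0"
  shows "Tf (t * (2 * (X - 3))) (t * (X + 3)) (t * (X + 3)) = 24*(X-3)/(X+3)^2"
    "Sf2 (t * (2 * (X - 3))) (t * (X + 3)) (t * (X + 3)) = 4*X^3/(X-3)^2"
proof -
  have e: "t*(X+3) + t*(X+3) - t*(2*(X-3)) = 12*t"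
     "t*(X+3) + t*(2*(X-3)) - t*(X+3) = t*(2*(X-3))"
     "t*(2*(X-3)) + t*(X+3) - t*(X+3) = t*(2*(X-3))"
     "t*(2*(X-3)) + t*(X+3) + t*(X+3) = 4*t*X" by (simp_all add: algebra_simps)
  have n: "X - 3 \<noteq> 0" "X + 3 \<noteq> 0" "t \<noteq> 0" using X t by auto
  show "Tf (t * (2 * (X - 3))) (t * (X + 3)) (t * (X + 3)) = 24*(X-3)/(X+3)^2"
    unfolding Tf_def e using n
    apply (subst frac_eq_eq)
      apply simp
     apply simp
    apply algebra
    done
  show "Sf2 (t * (2 * (X - 3))) (t * (X + 3)) (t * (X + 3)) = 4*X^3/(X-3)^2"
    unfolding Sf2_def e using n
    apply (subst frac_eq_eq)
      apply simp
     apply simp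
    apply algebra
    done
qed

lemma iso_vals:
  fixes x t :: real
  assumes x: "x > 3" and t: "t > 0"
  shows "Tf (t * (2 * (x^2 - 3))) (t * (x^2 + 3)) (t * (x^2 + 3)) = 24*(x^2-3)/(x^2+3)^2"
    "Sf2 (t * (2 * (x^2 - 3))) (t * (x^2 + 3)) (t * (x^2 + 3)) = (2*x^3/(x^2-3))^2"
proof -
  have x9: "x^2 > 9" using power_strict_mono[of 3 x 2] x by simp
  note iv = iso_valsX[OF x9 t]
  show "Tf (t * (2 * (x^2 - 3))) (t * (x^2 + 3)) (t * (x^2 + 3)) = 24*(x^2-3)/(x^2+3)^2" by (rule iv(1))
  have "(2*x^3/(x^2-3))^2 = 4*(x^2)^3/(x^2-3)^2" by (simp add: power_divide power_mult_distrib)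
  thus "Sf2 (t * (2 * (x^2 - 3))) (t * (x^2 + 3)) (t * (x^2 + 3)) = (2*x^3/(x^2-3))^2" using iv(2) by simp
qed

lemma shp_vals:
  fixes x a b c :: real
  assumes x: "x > 3" and sh: "shp x a b c"
  shows "Tf a b c = 24*(x^2-3)/(x^2+3)^2" "Sf2 a b c = (2*x^3/(x^2-3))^2"
proof -
  obtain t where t: "t > 0" and cs: "(a = t * (2 * (x^2 - 3)) \<and> b = t * (x^2 + 3) \<and> c = t * (x^2 + 3))
                    \<or> (b = t * (2 * (x^2 - 3)) \<and> a = t * (x^2 + 3) \<and> c = t * (x^2 + 3))
                    \<or> (c = t * (2 * (x^2 - 3)) \<and> a = t * (x^2 + 3) \<and> b = t * (x^2 + 3))"
    using sh unfolding shp_def by blast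
  note iv = iso_vals[OF x t]
  from cs have "Tf a b c = 24*(x^2-3)/(x^2+3)^2 \<and> Sf2 a b c = (2*x^3/(x^2-3))^2"
  proof (elim disjE conjE)
    assume "a = t * (2 * (x^2 - 3))" "b = t * (x^2 + 3)" "c = t * (x^2 + 3)"
    thus ?thesis using iv by simp
  next
    assume "b = t * (2 * (x^2 - 3))" "a = t * (x^2 + 3)" "c = t * (x^2 + 3)"
    thus ?thesis using iv Tf_sym(1)[of a b c] Sf2_sym(1)[of a b c] by simp
  next
    assume "c = t * (2 * (x^2 - 3))" "a = t * (x^2 + 3)" "b = t * (x^2 + 3)"
    thus ?thesis using iv Tf_sym(2)[of a b c] Sf2_sym(2)[of a b c] by simp
  qed
  thus "Tf a b c = 24*(x^2-3)/(x^2+3)^2" "Sf2 a b c = (2*x^3/(x^2-3))^2" by auto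
qed




theorem theorem1:
  fixes x0 x1 lam a b c :: real
  assumes x0_root: "x0^3 - 5 * x0^2 + 15 = 0"
    and x0_largest: "\<forall>y::real. y^3 - 5 * y^2 + 15 = 0 \<longrightarrow> y \<le> x0"
    and x1_in: "x1 \<in> {3<..<x0}"
    and x1_crit: "(fpaper has_real_derivative 0) (at x1)"
    and x1_unique: "\<forall>y\<in>{3<..<x0}. (fpaper has_real_derivative 0) (at y) \<longrightarrow> y = x1"
    and lam: "lam \<le> fpaper x1"
    and tri: "is_triangle a b c"
  shows "(sqrt 3 * semiperim a b c \<ge> 10 * inradius a b c
           - inradius a b c * (2 * inradius a b c / circumradius a b c) powr lam)
    \<and> ((sqrt 3 * semiperim a b c = 10 * inradius a b c
           - inradius a b c * (2 * inradius a b c / circumradius a b c) powr lam)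
         \<longleftrightarrow> (a = b \<and> b = c) \<or>
             (lam = fpaper x1 \<and>
               (\<exists>t>0. (a = t * (2 * (x1^2 - 3)) \<and> b = t * (x1^2 + 3) \<and> c = t * (x1^2 + 3))
                    \<or> (b = t * (2 * (x1^2 - 3)) \<and> a = t * (x1^2 + 3) \<and> c = t * (x1^2 + 3))
                    \<or> (c = t * (2 * (x1^2 - 3)) \<and> a = t * (x1^2 + 3) \<and> b = t * (x1^2 + 3)))))"
proof -
  have x04: "x0 > 4" by (rule x0_gt4[OF x0_largest])
  have x1: "3 < x1" "x1 < x0" using x1_in by auto
  have diff: "\<forall>y\<in>{3<..<x0}. \<exists>D. (fpaper has_real_derivative D) (at y)"
    using fpaper_diff[OF x0_root x04] by auto
  have Fmin: "\<forall>y\<in>{3<..<x0}. y \<noteq> x1 \<longrightarrow> fpaper x1 < fpaper y"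
  proof (rule unique_min[OF diff x1_unique, of "301/100" "767/250" "31/10"])
    show "fpaper (767/250) < fpaper (301/100)" using f_y0 f_z0 by linarith
    show "fpaper (767/250) < fpaper (31/10)" using f_w0 f_z0 by linarith
  qed (use x04 in auto)
  note C = core[OF x0_root x04 x1 Fmin tri]
  define T where "T = Tf a b c"
  define r where "r = inradius a b c"
  define s where "s = sqrt 3 * semiperim a b c / inradius a b c"
  define F where "F = fpaper x1"
  have r0: "r > 0" and TR: "2 * inradius a b c / circumradius a b c = T" and s0: "s > 0"
    and s2: "s^2 = Sf2 a b c" and T0: "0 < T" "T \<le> 1"
    using tri_facts[OF tri] unfolding T_def r_def s_def by auto
  have sp: "sqrt 3 * semiperim a b c = s * r" unfolding s_def r_def using r0 unfolding r_def by simp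
  have C1: "10 - s \<le> T powr F" and C2: "10 - s = T powr F \<Longrightarrow> (a = b \<and> b = c) \<or> shp x1 a b c"
    using C unfolding T_def s_def F_def by auto
  have mono: "T powr F \<le> T powr lam" using powr_mono'[OF lam[folded F_def], of T] T0 by simp
  have rhs: "10 * inradius a b c - inradius a b c * (2 * inradius a b c / circumradius a b c) powr lam
      = r * (10 - T powr lam)" unfolding TR r_def by (simp add: algebra_simps)
  have ineq: "r * (10 - T powr lam) \<le> s * r"
  proof -
    have "10 - T powr lam \<le> s" using C1 mono by linarith
    thus ?thesis using r0 by (simp add: mult.commute mult_left_mono)
  qed
  have eqv: "s * r = r * (10 - T powr lam) \<longleftrightarrow> s = 10 - T powr lam" using r0 by (auto simp: mult.commute)
  have iff: "s = 10 - T powr lam \<longleftrightarrow> (a = b \<and> b = c) \<or> (lam = F \<and> shp x1 a b c)"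
  proof
    assume e: "s = 10 - T powr lam"
    hence e1: "10 - s = T powr F" and e2: "T powr F = T powr lam" using C1 mono by linarith+
    from C2[OF e1] show "(a = b \<and> b = c) \<or> (lam = F \<and> shp x1 a b c)"
    proof
      assume sh: "shp x1 a b c"
      have "T = 24*(x1^2-3)/(x1^2+3)^2" using shp_vals(1)[OF x1(1) sh] unfolding T_def .
      hence "T < 1" using B_lt1(1)[OF x1(1)] by simp
      hence "F = lam" using e2 powr_inj[of T F lam] T0 by simp
      thus ?thesis using sh by simp
    qed simp
  next
    assume "(a = b \<and> b = c) \<or> (lam = F \<and> shp x1 a b c)"
    thus "s = 10 - T powr lam"
    proof
      assume eq: "a = b \<and> b = c"
      have ap: "a > 0" using tri unfolding is_triangle_def by simp
      have "T = 1" unfolding T_def Tf_def using eq ap by simp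
      moreover have "s^2 = 9^2" unfolding s2 Sf2_def using eq ap by (simp add: field_simps power3_eq_cube)
      hence "s = 9" using s0 by (smt (verit) power2_eq_imp_eq)
      ultimately show ?thesis by simp
    next
      assume h: "lam = F \<and> shp x1 a b c"
      hence sh: "shp x1 a b c" and lF: "lam = F" by auto
      have x9: "x1^2 > 9" using power_strict_mono[of 3 x1 2] x1 by simp
      have Tx: "T = 24*(x1^2-3)/(x1^2+3)^2" using shp_vals(1)[OF x1(1) sh] unfolding T_def .
      have Sx: "s^2 = (2*x1^3/(x1^2-3))^2" using shp_vals(2)[OF x1(1) sh] s2 by simp
      have Sxp: "2*x1^3/(x1^2-3) > 0" using x9 x1 by simp
      have sx: "s = 2*x1^3/(x1^2-3)" using Sx s0 Sxp by (smt (verit) power2_eq_imp_eq)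
      define A where "A = -(2*(x1^3-5*x1^2+15))/(x1^2-3)"
      have g: "x1^3 - 5*x1^2 + 15 < 0" using g_neg[OF x0_root x04, of x1] x1 by simp
      have A0: "A > 0" unfolding A_def using g x9 by (simp add: divide_pos_pos)
      have As: "A = 10 - s" unfolding A_def sx using x9 by (simp add: field_simps)
      have Tl: "T < 1" using B_lt1(1)[OF x1(1)] Tx by simp
      have lnT: "ln T \<noteq> 0" using Tl T0 by simp
      have Fd: "F = ln A / ln T" unfolding F_def fpaper_def A_def Tx ..
      have "T powr lam = exp (F * ln T)" unfolding lF powr_def using T0 by simp
      also have "F * ln T = ln A" unfolding Fd using lnT by simp
      also have "exp (ln A) = A" using A0 by simp
      finally show ?thesis using As by simp
    qed
  qed
  show ?thesis
    unfolding rhs sp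
    using ineq eqv iff unfolding F_def shp_def by auto
qed


end
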